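(* Let $(E,\langle\cdot,\cdot\rangle,\rho,\circ)$ be a pre-Courant algebroid over $M$ with Jacobiator $J$. For every $f\in C^\infty(M)$ and $e_2,e_3\in\Gamma(E)$, $J(\mathcal Df,e_2,e_3)=0$.
   Context: A Courant vector bundle over a smooth manifold $M$ is a vector bundle $E\to M$ with a fibrewise nondegenerate symmetric bilinear form $\langle\cdot,\cdot\rangle$ and a bundle map $\rho:E\to TM$ such that $\rho\circ\rho^*=0$, where $\rho^*:T^*M\to E^*\cong E$ is the dual of $\rho$ followed by the identification $E^*\cong E$ via $\langle\cdot,\cdot\rangle$. A pre-Courant algebroid structure on it is an $\mathbb R$-bilinear operation $\circ$ on $\Gamma(E)$ such that for all $e_1,e_2,e_3\in\Gamma(E)$: (i) $\rho(e_1\circ e_2)=[\rho(e_1),\rho(e_2)]$; (ii) $\langle e_1\circ e_1,e_2\rangle=\frac12\rho(e_2)\langle e_1,e_1\rangle$; (iii) $\rho(e_1)\langle e_2,e_3\rangle=\langle e_1\circ e_2,e_3\rangle+\langle e_2,e_1\circ e_3\rangle$. Define $\mathcal D:C^\infty(M)\to\Gamma(E)$ by $\langle\mathcal Df,e\rangle=\rho(e)f$. The Jacobiator is $J(e_1,e_2,e_3)=e_1\circ(e_2\circ e_3)-(e_1\circ e_2)\circ e_3-e_2\circ(e_1\circ e_3)$. *)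

theory Defs
  imports Main "HOL-Analysis.Analysis"
begin

text \<open>
  Points of M form the type 'm; C is the algebra C^\<infinity>(M) of smooth functions
  (a set of real functions on 'm); S is the space \<Gamma>(E) of smooth sections of E,
  realised as maps 'm \<Rightarrow> 'e into a real vector space 'e containing all fibres;
  the fibre E_x is {e x | e \<in> S}.  Smooth vector fields on M are the derivations
  of C (normalised to be 0 outside C so that they are determined by their action on C).
\<close>

definition smooth_algebra :: "('m \<Rightarrow> real) set \<Rightarrow> bool" where
  "smooth_algebra C \<longleftrightarrow> (\<forall>c::real. (\<lambda>x. c) \<in> C) \<and>
     (\<forall>f\<in>C. \<forall>h\<in>C. (\<lambda>x. f x + h x) \<in> C \<and> (\<lambda>x. f x * h x) \<in> C)"

definition is_vector_field ::
  "('m \<Rightarrow> real) set \<Rightarrow> (('m \<Rightarrow> real) \<Rightarrow> ('m \<Rightarrow> real)) \<Rightarrow> bool" where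
  "is_vector_field C X \<longleftrightarrow>
     (\<forall>f\<in>C. X f \<in> C) \<and>
     (\<forall>f. f \<notin> C \<longrightarrow> X f = (\<lambda>x. 0)) \<and>
     (\<forall>f\<in>C. \<forall>h\<in>C. \<forall>a b::real. X (\<lambda>x. a * f x + b * h x) = (\<lambda>x. a * X f x + b * X h x)) \<and>
     (\<forall>f\<in>C. \<forall>h\<in>C. X (\<lambda>x. f x * h x) = (\<lambda>x. f x * X h x + h x * X f x))"

definition vf_comb ::
  "('m \<Rightarrow> real) set \<Rightarrow> ('m \<Rightarrow> real) \<Rightarrow> (('m \<Rightarrow> real) \<Rightarrow> ('m \<Rightarrow> real))
     \<Rightarrow> (('m \<Rightarrow> real) \<Rightarrow> ('m \<Rightarrow> real)) \<Rightarrow> (('m \<Rightarrow> real) \<Rightarrow> ('m \<Rightarrow> real))" where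
  "vf_comb C a X Y = (\<lambda>f. if f \<in> C then (\<lambda>x. a x * X f x + Y f x) else (\<lambda>x. 0))"

definition lie_bracket ::
  "('m \<Rightarrow> real) set \<Rightarrow> (('m \<Rightarrow> real) \<Rightarrow> ('m \<Rightarrow> real))
     \<Rightarrow> (('m \<Rightarrow> real) \<Rightarrow> ('m \<Rightarrow> real)) \<Rightarrow> (('m \<Rightarrow> real) \<Rightarrow> ('m \<Rightarrow> real))" where
  "lie_bracket C X Y = (\<lambda>f. if f \<in> C then (\<lambda>x. X (Y f) x - Y (X f) x) else (\<lambda>x. 0))"

definition one_form ::
  "('m \<Rightarrow> real) set \<Rightarrow> ((('m \<Rightarrow> real) \<Rightarrow> ('m \<Rightarrow> real)) \<Rightarrow> ('m \<Rightarrow> real)) \<Rightarrow> bool" where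
  "one_form C \<xi> \<longleftrightarrow>
     (\<forall>X. is_vector_field C X \<longrightarrow> \<xi> X \<in> C) \<and>
     (\<forall>a\<in>C. \<forall>X Y. is_vector_field C X \<longrightarrow> is_vector_field C Y \<longrightarrow>
        \<xi> (vf_comb C a X Y) = (\<lambda>x. a x * \<xi> X x + \<xi> Y x))"

definition pairing ::
  "('m \<Rightarrow> 'e \<Rightarrow> 'e \<Rightarrow> real) \<Rightarrow> ('m \<Rightarrow> 'e) \<Rightarrow> ('m \<Rightarrow> 'e) \<Rightarrow> ('m \<Rightarrow> real)" where
  "pairing g e1 e2 = (\<lambda>x. g x (e1 x) (e2 x))"

definition fibre :: "('m \<Rightarrow> 'e) set \<Rightarrow> 'm \<Rightarrow> 'e set" where
  "fibre S x = {e x | e. e \<in> S}"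

text \<open>\<rho>^*: T^*M \<rightarrow> E^* \<cong> E, at the level of sections: \<rho>^* \<xi> is the section s with
  <s, e> = \<xi>(\<rho> e) for all sections e.\<close>
definition anchor_dual ::
  "('m \<Rightarrow> 'e) set \<Rightarrow> ('m \<Rightarrow> 'e \<Rightarrow> 'e \<Rightarrow> real) \<Rightarrow> (('m \<Rightarrow> 'e) \<Rightarrow> (('m \<Rightarrow> real) \<Rightarrow> ('m \<Rightarrow> real)))
     \<Rightarrow> ((('m \<Rightarrow> real) \<Rightarrow> ('m \<Rightarrow> real)) \<Rightarrow> ('m \<Rightarrow> real)) \<Rightarrow> ('m \<Rightarrow> 'e)" where
  "anchor_dual S g \<rho> \<xi> = (THE s. s \<in> S \<and> (\<forall>e\<in>S. pairing g s e = \<xi> (\<rho> e)))"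

definition courant_vector_bundle ::
  "('m \<Rightarrow> real) set \<Rightarrow> ('m \<Rightarrow> 'e::real_vector) set \<Rightarrow> ('m \<Rightarrow> 'e \<Rightarrow> 'e \<Rightarrow> real)
     \<Rightarrow> (('m \<Rightarrow> 'e) \<Rightarrow> (('m \<Rightarrow> real) \<Rightarrow> ('m \<Rightarrow> real))) \<Rightarrow> bool" where
  "courant_vector_bundle C S g \<rho> \<longleftrightarrow>
     smooth_algebra C \<and>
     \<comment> \<open>sections form a C^\<infinity>(M)-module\<close>
     (\<lambda>x. 0) \<in> S \<and>
     (\<forall>e1\<in>S. \<forall>e2\<in>S. (\<lambda>x. e1 x + e2 x) \<in> S) \<and>
     (\<forall>a\<in>C. \<forall>e\<in>S. (\<lambda>x. a x *\<^sub>R e x) \<in> S) \<and>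
     \<comment> \<open>fibrewise symmetric bilinear form, nondegenerate on each fibre, smooth\<close>
     (\<forall>x. \<forall>v w. g x v w = g x w v) \<and>
     (\<forall>x. \<forall>u v w. \<forall>a b::real. g x (a *\<^sub>R u + b *\<^sub>R v) w = a * g x u w + b * g x v w) \<and>
     (\<forall>x. \<forall>v\<in>fibre S x. (\<forall>w\<in>fibre S x. g x v w = 0) \<longrightarrow> v = 0) \<and>
     (\<forall>e1\<in>S. \<forall>e2\<in>S. pairing g e1 e2 \<in> C) \<and>
     \<comment> \<open>the anchor is a bundle map E \<rightarrow> TM\<close>
     (\<forall>e\<in>S. is_vector_field C (\<rho> e)) \<and>
     (\<forall>a\<in>C. \<forall>e1\<in>S. \<forall>e2\<in>S. \<rho> (\<lambda>x. a x *\<^sub>R e1 x + e2 x) = vf_comb C a (\<rho> e1) (\<rho> e2)) \<and>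
     \<comment> \<open>\<rho>^* exists (E^* \<cong> E via the form)\<close>
     (\<forall>\<xi>. one_form C \<xi> \<longrightarrow> (\<exists>s\<in>S. \<forall>e\<in>S. pairing g s e = \<xi> (\<rho> e))) \<and>
     \<comment> \<open>\<rho> \<circ> \<rho>^* = 0\<close>
     (\<forall>\<xi>. one_form C \<xi> \<longrightarrow> (\<forall>f\<in>C. \<rho> (anchor_dual S g \<rho> \<xi>) f = (\<lambda>x. 0)))"

definition pre_courant_algebroid ::
  "('m \<Rightarrow> real) set \<Rightarrow> ('m \<Rightarrow> 'e::real_vector) set \<Rightarrow> ('m \<Rightarrow> 'e \<Rightarrow> 'e \<Rightarrow> real)
     \<Rightarrow> (('m \<Rightarrow> 'e) \<Rightarrow> (('m \<Rightarrow> real) \<Rightarrow> ('m \<Rightarrow> real)))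
     \<Rightarrow> (('m \<Rightarrow> 'e) \<Rightarrow> ('m \<Rightarrow> 'e) \<Rightarrow> ('m \<Rightarrow> 'e)) \<Rightarrow> bool" where
  "pre_courant_algebroid C S g \<rho> circ \<longleftrightarrow>
     courant_vector_bundle C S g \<rho> \<and>
     (\<forall>e1\<in>S. \<forall>e2\<in>S. circ e1 e2 \<in> S) \<and>
     \<comment> \<open>\<real>-bilinearity\<close>
     (\<forall>e1\<in>S. \<forall>e2\<in>S. \<forall>e3\<in>S. \<forall>a b::real.
        circ (\<lambda>x. a *\<^sub>R e1 x + b *\<^sub>R e2 x) e3 = (\<lambda>x. a *\<^sub>R circ e1 e3 x + b *\<^sub>R circ e2 e3 x) \<and>
        circ e3 (\<lambda>x. a *\<^sub>R e1 x + b *\<^sub>R e2 x) = (\<lambda>x. a *\<^sub>R circ e3 e1 x + b *\<^sub>R circ e3 e2 x)) \<and>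
     \<comment> \<open>(i)\<close>
     (\<forall>e1\<in>S. \<forall>e2\<in>S. \<rho> (circ e1 e2) = lie_bracket C (\<rho> e1) (\<rho> e2)) \<and>
     \<comment> \<open>(ii)\<close>
     (\<forall>e1\<in>S. \<forall>e2\<in>S. pairing g (circ e1 e1) e2 = (\<lambda>x. (1/2) * \<rho> e2 (pairing g e1 e1) x)) \<and>
     \<comment> \<open>(iii)\<close>
     (\<forall>e1\<in>S. \<forall>e2\<in>S. \<forall>e3\<in>S.
        \<rho> e1 (pairing g e2 e3) = (\<lambda>x. pairing g (circ e1 e2) e3 x + pairing g e2 (circ e1 e3) x))"

definition Dop ::
  "('m \<Rightarrow> 'e) set \<Rightarrow> ('m \<Rightarrow> 'e \<Rightarrow> 'e \<Rightarrow> real) \<Rightarrow> (('m \<Rightarrow> 'e) \<Rightarrow> (('m \<Rightarrow> real) \<Rightarrow> ('m \<Rightarrow> real)))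
     \<Rightarrow> ('m \<Rightarrow> real) \<Rightarrow> ('m \<Rightarrow> 'e)" where
  "Dop S g \<rho> f = (THE s. s \<in> S \<and> (\<forall>e\<in>S. pairing g s e = \<rho> e f))"

definition jacobiator ::
  "(('m \<Rightarrow> 'e::real_vector) \<Rightarrow> ('m \<Rightarrow> 'e) \<Rightarrow> ('m \<Rightarrow> 'e)) \<Rightarrow> ('m \<Rightarrow> 'e) \<Rightarrow> ('m \<Rightarrow> 'e) \<Rightarrow> ('m \<Rightarrow> 'e) \<Rightarrow> ('m \<Rightarrow> 'e)" where
  "jacobiator circ e1 e2 e3 =
     (\<lambda>x. circ e1 (circ e2 e3) x - circ (circ e1 e2) e3 x - circ e2 (circ e1 e3) x)"

end

theory Submission
  imports Defs
begin

lemma vf_add: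
  assumes "is_vector_field C X" "f \<in> C" "h \<in> C"
  shows "X (\<lambda>x. f x + h x) = (\<lambda>x. X f x + X h x)"
proof -
  have "X (\<lambda>x. 1 * f x + 1 * h x) = (\<lambda>x. 1 * X f x + 1 * X h x)"
    using assms unfolding is_vector_field_def by blast
  then show ?thesis by simp
qed

lemma polar:
  assumes P: "pre_courant_algebroid C S g \<rho> circ"
    and a: "a \<in> S" and b: "b \<in> S" and c: "c \<in> S"
  shows "pairing g (circ a b) c x + pairing g (circ b a) c x = \<rho> c (pairing g a b) x"
proof -
  have SA: "\<forall>e1\<in>S. \<forall>e2\<in>S. (\<lambda>x. e1 x + e2 x) \<in> S"
    using P unfolding pre_courant_algebroid_def courant_vector_bundle_def by (elim conjE) assumption
  have gsym: "\<forall>x. \<forall>v w. g x v w = g x w v"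
    using P unfolding pre_courant_algebroid_def courant_vector_bundle_def by (elim conjE) assumption
  have glin: "\<forall>x. \<forall>u v w. \<forall>a b::real. g x (a *\<^sub>R u + b *\<^sub>R v) w = a * g x u w + b * g x v w"
    using P unfolding pre_courant_algebroid_def courant_vector_bundle_def by (elim conjE) assumption
  have pC: "\<forall>e1\<in>S. \<forall>e2\<in>S. pairing g e1 e2 \<in> C"
    using P unfolding pre_courant_algebroid_def courant_vector_bundle_def by (elim conjE) assumption
  have vf: "\<forall>e\<in>S. is_vector_field C (\<rho> e)"
    using P unfolding pre_courant_algebroid_def courant_vector_bundle_def by (elim conjE) assumption
  have circS: "\<forall>e1\<in>S. \<forall>e2\<in>S. circ e1 e2 \<in> S"
    using P unfolding pre_courant_algebroid_def courant_vector_bundle_def by (elim conjE) assumption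
  have bil: "\<forall>e1\<in>S. \<forall>e2\<in>S. \<forall>e3\<in>S. \<forall>a b::real.
        circ (\<lambda>x. a *\<^sub>R e1 x + b *\<^sub>R e2 x) e3 = (\<lambda>x. a *\<^sub>R circ e1 e3 x + b *\<^sub>R circ e2 e3 x) \<and>
        circ e3 (\<lambda>x. a *\<^sub>R e1 x + b *\<^sub>R e2 x) = (\<lambda>x. a *\<^sub>R circ e3 e1 x + b *\<^sub>R circ e3 e2 x)"
    using P unfolding pre_courant_algebroid_def courant_vector_bundle_def by (elim conjE) assumption
  have ii: "\<forall>e1\<in>S. \<forall>e2\<in>S. pairing g (circ e1 e1) e2 = (\<lambda>x. (1/2) * \<rho> e2 (pairing g e1 e1) x)"
    using P unfolding pre_courant_algebroid_def courant_vector_bundle_def by (elim conjE) assumption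
  have gadd: "\<And>x u v w. g x (u + v) w = g x u w + g x v w"
    using glin[rule_format, of _ 1 _ 1] by simp
  have gadd2: "\<And>x u v w. g x w (u + v) = g x w u + g x w v"
    by (subst (1 2 3) gsym[rule_format]) (rule gadd)
  define s where "s = (\<lambda>x. a x + b x)"
  have sS: "s \<in> S" using SA a b s_def by blast
  have c1: "circ s e = (\<lambda>x. circ a e x + circ b e x)" if "e \<in> S" for e
    using conjunct1[OF bil[rule_format, OF a b that, of 1 1]] unfolding s_def by simp
  have c2: "circ e s = (\<lambda>x. circ e a x + circ e b x)" if "e \<in> S" for e
    using conjunct2[OF bil[rule_format, OF a b that, of 1 1]] unfolding s_def by simp
  have css: "circ s s = (\<lambda>x. circ a a x + circ a b x + (circ b a x + circ b b x))"
    using c1[OF sS] c2[OF a] c2[OF b] by simp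
  have lhs: "pairing g (circ s s) c x = pairing g (circ a a) c x + pairing g (circ a b) c x
     + (pairing g (circ b a) c x + pairing g (circ b b) c x)"
    unfolding css pairing_def by (simp add: gadd)
  have pas: "pairing g a s = (\<lambda>x. pairing g a a x + pairing g a b x)"
    unfolding s_def pairing_def by (simp add: gadd2)
  have pbs: "pairing g b s = (\<lambda>x. pairing g b a x + pairing g b b x)"
    unfolding s_def pairing_def by (simp add: gadd2)
  have pss: "pairing g s s = (\<lambda>x. pairing g a s x + pairing g b s x)"
    unfolding s_def pairing_def by (simp add: gadd)
  have pba: "pairing g b a = pairing g a b" unfolding pairing_def using gsym by auto
  have V: "is_vector_field C (\<rho> c)" using vf c by blast
  have "\<rho> c (pairing g s s) x = \<rho> c (pairing g a a) x + \<rho> c (pairing g a b) x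
      + (\<rho> c (pairing g a b) x + \<rho> c (pairing g b b) x)"
  proof -
    have "\<rho> c (pairing g s s) = (\<lambda>x. \<rho> c (pairing g a s) x + \<rho> c (pairing g b s) x)"
      unfolding pss by (rule vf_add[OF V]) (use pC a b sS in auto)
    moreover have "\<rho> c (pairing g a s) = (\<lambda>x. \<rho> c (pairing g a a) x + \<rho> c (pairing g a b) x)"
      unfolding pas by (rule vf_add[OF V]) (use pC a b in auto)
    moreover have "\<rho> c (pairing g b s) = (\<lambda>x. \<rho> c (pairing g a b) x + \<rho> c (pairing g b b) x)"
      unfolding pbs pba by (rule vf_add[OF V]) (use pC a b in auto)
    ultimately show ?thesis by simp
  qed
  moreover have "pairing g (circ s s) c x = (1/2) * \<rho> c (pairing g s s) x"
    using fun_cong[OF ii[rule_format, OF sS c], of x] by simp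
  moreover have "pairing g (circ a a) c x = (1/2) * \<rho> c (pairing g a a) x"
    using fun_cong[OF ii[rule_format, OF a c], of x] by simp
  moreover have "pairing g (circ b b) c x = (1/2) * \<rho> c (pairing g b b) x"
    using fun_cong[OF ii[rule_format, OF b c], of x] by simp
  ultimately show ?thesis using lhs by linarith
qed

theorem lemma3p7:
  fixes C :: "('m \<Rightarrow> real) set"
    and S :: "('m \<Rightarrow> 'e::real_vector) set"
    and g :: "'m \<Rightarrow> 'e \<Rightarrow> 'e \<Rightarrow> real"
    and \<rho> :: "('m \<Rightarrow> 'e) \<Rightarrow> (('m \<Rightarrow> real) \<Rightarrow> ('m \<Rightarrow> real))"
    and circ :: "('m \<Rightarrow> 'e) \<Rightarrow> ('m \<Rightarrow> 'e) \<Rightarrow> ('m \<Rightarrow> 'e)"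
  assumes "pre_courant_algebroid C S g \<rho> circ"
    and "f \<in> C" and "e2 \<in> S" and "e3 \<in> S"
  shows "jacobiator circ (Dop S g \<rho> f) e2 e3 = (\<lambda>x. 0)"
proof -
  note P = assms(1)
  have sa: "smooth_algebra C"
    using P unfolding pre_courant_algebroid_def courant_vector_bundle_def by (elim conjE) assumption
  have SA: "\<forall>e1\<in>S. \<forall>e2\<in>S. (\<lambda>x. e1 x + e2 x) \<in> S"
    using P unfolding pre_courant_algebroid_def courant_vector_bundle_def by (elim conjE) assumption
  have SM: "\<forall>a\<in>C. \<forall>e\<in>S. (\<lambda>x. a x *\<^sub>R e x) \<in> S"
    using P unfolding pre_courant_algebroid_def courant_vector_bundle_def by (elim conjE) assumption
  have glin: "\<forall>x. \<forall>u v w. \<forall>a b::real. g x (a *\<^sub>R u + b *\<^sub>R v) w = a * g x u w + b * g x v w"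
    using P unfolding pre_courant_algebroid_def courant_vector_bundle_def by (elim conjE) assumption
  have gnd: "\<forall>x. \<forall>v\<in>fibre S x. (\<forall>w\<in>fibre S x. g x v w = 0) \<longrightarrow> v = 0"
    using P unfolding pre_courant_algebroid_def courant_vector_bundle_def by (elim conjE) assumption
  have gsym: "\<forall>x. \<forall>v w. g x v w = g x w v"
    using P unfolding pre_courant_algebroid_def courant_vector_bundle_def by (elim conjE) assumption
  have vf: "\<forall>e\<in>S. is_vector_field C (\<rho> e)"
    using P unfolding pre_courant_algebroid_def courant_vector_bundle_def by (elim conjE) assumption
  have dex: "\<forall>\<xi>. one_form C \<xi> \<longrightarrow> (\<exists>s\<in>S. \<forall>e\<in>S. pairing g s e = \<xi> (\<rho> e))"
    using P unfolding pre_courant_algebroid_def courant_vector_bundle_def by (elim conjE) assumption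
  have dz: "\<forall>\<xi>. one_form C \<xi> \<longrightarrow> (\<forall>f\<in>C. \<rho> (anchor_dual S g \<rho> \<xi>) f = (\<lambda>x. 0))"
    using P unfolding pre_courant_algebroid_def courant_vector_bundle_def by (elim conjE) assumption
  have circS: "\<forall>e1\<in>S. \<forall>e2\<in>S. circ e1 e2 \<in> S"
    using P unfolding pre_courant_algebroid_def courant_vector_bundle_def by (elim conjE) assumption
  have bil: "\<forall>e1\<in>S. \<forall>e2\<in>S. \<forall>e3\<in>S. \<forall>a b::real.
        circ (\<lambda>x. a *\<^sub>R e1 x + b *\<^sub>R e2 x) e3 = (\<lambda>x. a *\<^sub>R circ e1 e3 x + b *\<^sub>R circ e2 e3 x) \<and>
        circ e3 (\<lambda>x. a *\<^sub>R e1 x + b *\<^sub>R e2 x) = (\<lambda>x. a *\<^sub>R circ e3 e1 x + b *\<^sub>R circ e3 e2 x)"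
    using P unfolding pre_courant_algebroid_def courant_vector_bundle_def by (elim conjE) assumption
  have i: "\<forall>e1\<in>S. \<forall>e2\<in>S. \<rho> (circ e1 e2) = lie_bracket C (\<rho> e1) (\<rho> e2)"
    using P unfolding pre_courant_algebroid_def courant_vector_bundle_def by (elim conjE) assumption
  have iii: "\<forall>e1\<in>S. \<forall>e2\<in>S. \<forall>e3\<in>S.
        \<rho> e1 (pairing g e2 e3) = (\<lambda>x. pairing g (circ e1 e2) e3 x + pairing g e2 (circ e1 e3) x)"
    using P unfolding pre_courant_algebroid_def courant_vector_bundle_def by (elim conjE) assumption
  have const: "(\<lambda>x. c) \<in> C" for c :: real using sa unfolding smooth_algebra_def by blast
  have gdiff: "g x (u - v) w = g x u w - g x v w" for x u v w
    using glin[rule_format, of x 1 u "-1" v w] by simp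
  have nd: "s = t" if "s \<in> S" "t \<in> S" "\<And>e. e \<in> S \<Longrightarrow> pairing g s e = pairing g t e" for s t
  proof
    fix x
    have dS: "(\<lambda>x. s x + (-1) *\<^sub>R t x) \<in> S"
    proof -
      have m: "(\<lambda>x. (\<lambda>y. -1::real) x *\<^sub>R t x) \<in> S" using SM[rule_format, OF const[of "-1"] that(2)] by simp
      show ?thesis using SA[rule_format, OF that(1) m] by simp
    qed
    have vf': "s x - t x \<in> fibre S x"
      using dS unfolding fibre_def by (auto intro!: exI[of _ "(\<lambda>x. s x + (-1) *\<^sub>R t x)"])
    have "\<forall>w\<in>fibre S x. g x (s x - t x) w = 0"
    proof
      fix w assume "w \<in> fibre S x"
      then obtain e where e: "e \<in> S" "w = e x" unfolding fibre_def by blast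
      have "pairing g s e x = pairing g t e x" using that(3)[OF e(1)] by simp
      then show "g x (s x - t x) w = 0" using e unfolding pairing_def by (simp add: gdiff)
    qed
    then have "s x - t x = 0" using gnd vf' by blast
    then show "s x = t x" by simp
  qed
  define \<xi> where "\<xi> = (\<lambda>X::('m \<Rightarrow> real) \<Rightarrow> ('m \<Rightarrow> real). X f)"
  have of: "one_form C \<xi>"
    unfolding one_form_def \<xi>_def vf_comb_def using assms(2)
    by (auto simp: is_vector_field_def)
  obtain d where dS: "d \<in> S" and dp: "\<forall>e\<in>S. pairing g d e = \<rho> e f"
    using dex of unfolding \<xi>_def by blast
  have Dd: "Dop S g \<rho> f = d"
    unfolding Dop_def
    by (rule the_equality) (use dS dp nd in auto)
  have Ad: "anchor_dual S g \<rho> \<xi> = d"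
    unfolding anchor_dual_def \<xi>_def
    by (rule the_equality) (use dS dp nd in auto)
  have rd: "\<forall>h\<in>C. \<rho> d h = (\<lambda>x. 0)" using dz[rule_format, OF of] Ad by simp
  have zero_l: "circ (\<lambda>x. 0) e = (\<lambda>x. 0)" if "e \<in> S" for e
    using bil[rule_format, OF that that that, of 0 0] by simp
  have zero_r: "circ e (\<lambda>x. 0) = (\<lambda>x. 0)" if "e \<in> S" for e
    using bil[rule_format, OF that that that, of 0 0] by simp
  have pz: "pairing g (\<lambda>x. 0) e = pairing g (\<lambda>x. 0) e'" for e e'
    unfolding pairing_def using glin[rule_format, of _ 0 0 0 0] by simp
  have key: "circ d e = (\<lambda>x. 0)" if e: "e \<in> S" for e
  proof -
    have zS: "(\<lambda>x. 0) \<in> S" using P unfolding pre_courant_algebroid_def courant_vector_bundle_def by (elim conjE) assumption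
    have "pairing g (circ d e) e' = pairing g (\<lambda>x. 0) e'" if e': "e' \<in> S" for e'
    proof
      fix x
      have fC: "\<rho> e' f \<in> C" "\<rho> e f \<in> C" using vf e e' assms(2) unfolding is_vector_field_def by blast+
      have eeS: "circ e e' \<in> S" using circS e e' by blast
      have A: "pairing g (circ e d) e' x = \<rho> e (\<rho> e' f) x - \<rho> (circ e e') f x"
      proof -
        have "\<rho> e (pairing g d e') x = pairing g (circ e d) e' x + pairing g d (circ e e') x"
          using fun_cong[OF iii[rule_format, OF e dS e'], of x] by simp
        moreover have "pairing g d e' = \<rho> e' f" using dp e' by blast
        moreover have "pairing g d (circ e e') = \<rho> (circ e e') f" using dp eeS by blast
        ultimately show ?thesis by simp
      qed
      have B: "\<rho> (circ e e') f x = \<rho> e (\<rho> e' f) x - \<rho> e' (\<rho> e f) x"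
        using i e e' assms(2) unfolding lie_bracket_def by simp
      have Cp: "pairing g (circ d e) e' x + pairing g (circ e d) e' x = \<rho> e' (pairing g d e) x"
        by (rule polar[OF P dS e e'])
      have "pairing g d e = \<rho> e f" using dp e by blast
      then have "pairing g (circ d e) e' x = 0" using A B Cp by simp
      moreover have "pairing g (\<lambda>x. 0) e' x = 0" unfolding pairing_def
        using glin[rule_format, of x 0 0 0 0] by simp
      ultimately show "pairing g (circ d e) e' x = pairing g (\<lambda>x. 0) e' x" by simp
    qed
    then show ?thesis using nd circS dS e zS by blast
  qed
  have e23: "circ e2 e3 \<in> S" using circS assms by blast
  show ?thesis
    unfolding jacobiator_def Dd
    using key[OF e23] key[OF assms(3)] key[OF assms(4)] zero_l[OF assms(4)] zero_r[OF assms(3)]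
    by simp
qed

end
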